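(* Let $V:\mathbb{R}^{d_1}\times\mathbb{R}^{d_2}\to\mathbb{R}^n$ be residual-homogeneous, $V(\theta_1,\theta_2)=\Phi\theta_1+g(\theta_2)$, where $\Phi\in\mathbb{R}^{n\times d_1}$ has full rank and $g$ is continuously differentiable and $h$-homogeneous, and suppose there are constants $C,\ell>0$ with $\Vert V(\theta)\Vert_\mu\le C\Vert\theta\Vert^\ell$ for all $\theta$. Let $\Pi_\Phi$ be the projection onto the column span of $\Phi$. Then for any initial condition, if $\theta(t)$ follows $\dot\theta=-\nabla V(\theta)^T A\,(V(\theta)-V^* )$, we have $$\liminf_{t\to\infty}\Vert V(\theta(t))-V^*\Vert_\mu\le\Big(1+\frac{1+\gamma}{1-\gamma}\Big)\Vert V^*-\Pi_\Phi V^*\Vert_\mu.$$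
   Context: A Markov reward process has finite state space with $n$ states, transition matrix $P$ defining an irreducible, aperiodic Markov chain with stationary distribution $\mu$, a finite reward function $r(s,s')$, and discount factor $\gamma\in[0,1)$. Let $R(s)=\mathbb{E}_{s'\sim P(\cdot|s)}[r(s,s')]$ and let $V^*\in\mathbb{R}^n$ be the unique solution of $V^*=R+\gamma PV^*$. Let $D_\mu=\mathrm{diag}(\mu)$ and $A:=D_\mu(I-\gamma P)$. For $x\in\mathbb{R}^n$, $\Vert x\Vert_\mu^2=x^TD_\mu x$; $\Vert\theta\Vert$ is the Euclidean norm. $\nabla V(\theta)$ is the Jacobian of $V$ with respect to $\theta=(\theta_1,\theta_2)$. A differentiable $f:\mathbb{R}^k\to\mathbb{R}^m$ is $h$-homogeneous (for $h\in\mathbb{R}$) if $f(x)=h\,\nabla f(x)\,x$ for all $x$. The projection $\Pi_\Phi$ is taken orthogonal with respect to $\langle x,y\rangle_\mu=x^TD_\mu y$. *)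

theory Defs
  imports "HOL-Analysis.Analysis"
begin

primrec mat_pow :: "real^'n^'n \<Rightarrow> nat \<Rightarrow> real^'n^'n" where
  "mat_pow P 0 = mat 1"
| "mat_pow P (Suc k) = mat_pow P k ** P"

(* row-stochastic transition matrix: P $ s $ s' = P(s'|s) *)
definition stochastic_matrix :: "real^'n^'n \<Rightarrow> bool" where
  "stochastic_matrix P \<longleftrightarrow> (\<forall>i j. P $ i $ j \<ge> 0) \<and> (\<forall>i. (\<Sum>j\<in>UNIV. P $ i $ j) = 1)"

definition irreducible_chain :: "real^'n^'n \<Rightarrow> bool" where
  "irreducible_chain P \<longleftrightarrow> (\<forall>i j. \<exists>k. mat_pow P k $ i $ j > 0)"

definition aperiodic_chain :: "real^'n^'n \<Rightarrow> bool" where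
  "aperiodic_chain P \<longleftrightarrow> (\<forall>i. Gcd {k. k > 0 \<and> mat_pow P k $ i $ i > 0} = (1::nat))"

definition stationary_distribution :: "real^'n^'n \<Rightarrow> real^'n \<Rightarrow> bool" where
  "stationary_distribution P \<mu> \<longleftrightarrow>
     (\<forall>i. \<mu> $ i \<ge> 0) \<and> (\<Sum>i\<in>UNIV. \<mu> $ i) = 1 \<and> \<mu> v* P = \<mu>"

definition diag_mat :: "real^'n \<Rightarrow> real^'n^'n" where
  "diag_mat \<mu> = (\<chi> i j. if i = j then \<mu> $ i else 0)"

definition inner_mu :: "real^'n \<Rightarrow> real^'n \<Rightarrow> real^'n \<Rightarrow> real" where
  "inner_mu \<mu> x y = (\<Sum>i\<in>UNIV. \<mu> $ i * x $ i * y $ i)"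

definition norm_mu :: "real^'n \<Rightarrow> real^'n \<Rightarrow> real" where
  "norm_mu \<mu> x = sqrt (inner_mu \<mu> x x)"

definition proj_mu :: "real^'n \<Rightarrow> real^'d^'n \<Rightarrow> real^'n \<Rightarrow> real^'n" where
  "proj_mu \<mu> \<Phi> x = (THE y. y \<in> range (\<lambda>w. \<Phi> *v w) \<and> (\<forall>w. inner_mu \<mu> (x - y) (\<Phi> *v w) = 0))"

end

theory Submission
  imports Defs
begin


definition scl :: "real^'n \<Rightarrow> real^'n \<Rightarrow> real^'n" where
  "scl \<mu> x = (\<chi> i. sqrt (\<mu> $ i) * x $ i)"

lemma inner_mu_scl:
  assumes "\<forall>i. \<mu> $ i \<ge> 0"
  shows "inner_mu \<mu> x y = scl \<mu> x \<bullet> scl \<mu> y"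
  unfolding inner_mu_def scl_def inner_vec_def
  by (rule sum.cong) (use assms in \<open>auto simp: real_sqrt_mult[symmetric]\<close>)

lemma norm_mu_scl:
  assumes "\<forall>i. \<mu> $ i \<ge> 0"
  shows "norm_mu \<mu> x = norm (scl \<mu> x)"
  unfolding norm_mu_def inner_mu_scl[OF assms] norm_eq_sqrt_inner ..

lemma scl_linear: "scl \<mu> (x + y) = scl \<mu> x + scl \<mu> y" "scl \<mu> (x - y) = scl \<mu> x - scl \<mu> y"
  "scl \<mu> (c *\<^sub>R x) = c *\<^sub>R scl \<mu> x" "scl \<mu> (-x) = - scl \<mu> x"
  unfolding scl_def by (auto simp: vec_eq_iff algebra_simps)

lemma linear_scl: "linear (scl \<mu>)"
  by (rule linearI) (simp_all add: scl_linear)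

lemma inner_mu_CS:
  assumes "\<forall>i. \<mu> $ i \<ge> 0"
  shows "\<bar>inner_mu \<mu> x y\<bar> \<le> norm_mu \<mu> x * norm_mu \<mu> y"
  using assms by (simp add: inner_mu_scl norm_mu_scl Cauchy_Schwarz_ineq2)

lemma inner_mu_simps:
  "inner_mu \<mu> (x + y) z = inner_mu \<mu> x z + inner_mu \<mu> y z"
  "inner_mu \<mu> (x - y) z = inner_mu \<mu> x z - inner_mu \<mu> y z"
  "inner_mu \<mu> z (x + y) = inner_mu \<mu> z x + inner_mu \<mu> z y"
  "inner_mu \<mu> z (x - y) = inner_mu \<mu> z x - inner_mu \<mu> z y"
  "inner_mu \<mu> (c *\<^sub>R x) z = c * inner_mu \<mu> x z"
  "inner_mu \<mu> z (c *\<^sub>R x) = c * inner_mu \<mu> z x"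
  unfolding inner_mu_def by (auto simp: algebra_simps sum.distrib sum_subtractf sum_distrib_left)

lemma jensen_sq:
  fixes p x :: "'a \<Rightarrow> real"
  assumes "finite I" "\<forall>j\<in>I. p j \<ge> 0" "sum p I = 1"
  shows "(\<Sum>j\<in>I. p j * x j)\<^sup>2 \<le> (\<Sum>j\<in>I. p j * (x j)\<^sup>2)"
proof -
  define m where "m = (\<Sum>j\<in>I. p j * x j)"
  have "0 \<le> (\<Sum>j\<in>I. p j * (x j - m)\<^sup>2)"
    using assms by (intro sum_nonneg) auto
  also have "\<dots> = (\<Sum>j\<in>I. p j * (x j)\<^sup>2) - 2 * m * m + m\<^sup>2 * sum p I"
    by (simp add: power2_diff algebra_simps sum.distrib sum_subtractf sum_distrib_left sum_distrib_right m_def)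
  finally show ?thesis using assms(3) by (simp add: m_def power2_eq_square)
qed

lemma norm_mu_P:
  assumes stoch: "stochastic_matrix P" and stat: "stationary_distribution P \<mu>"
  shows "norm_mu \<mu> (P *v x) \<le> norm_mu \<mu> x"
proof -
  have mu0: "\<forall>i. \<mu> $ i \<ge> 0" and muP: "\<mu> v* P = \<mu>" using stat by (auto simp: stationary_distribution_def)
  have "inner_mu \<mu> (P *v x) (P *v x) = (\<Sum>i\<in>UNIV. \<mu> $ i * (\<Sum>j\<in>UNIV. P $ i $ j * x $ j)\<^sup>2)"
    by (simp add: inner_mu_def matrix_vector_mult_def power2_eq_square mult.assoc)
  also have "\<dots> \<le> (\<Sum>i\<in>UNIV. \<mu> $ i * (\<Sum>j\<in>UNIV. P $ i $ j * (x $ j)\<^sup>2))"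
    using stoch mu0 unfolding stochastic_matrix_def
    by (intro sum_mono mult_left_mono jensen_sq) auto
  also have "\<dots> = (\<Sum>j\<in>UNIV. (\<Sum>i\<in>UNIV. P $ i $ j * \<mu> $ i) * (x $ j)\<^sup>2)"
  proof -
    have "(\<Sum>i\<in>UNIV. \<mu> $ i * (\<Sum>j\<in>UNIV. P $ i $ j * (x $ j)\<^sup>2)) = (\<Sum>i\<in>UNIV. \<Sum>j\<in>UNIV. P $ i $ j * \<mu> $ i * (x $ j)\<^sup>2)"
      by (simp add: sum_distrib_left mult.assoc mult.left_commute)
    also have "\<dots> = (\<Sum>j\<in>UNIV. \<Sum>i\<in>UNIV. P $ i $ j * \<mu> $ i * (x $ j)\<^sup>2)"
      by (rule sum.swap)
    also have "\<dots> = (\<Sum>j\<in>UNIV. (\<Sum>i\<in>UNIV. P $ i $ j * \<mu> $ i) * (x $ j)\<^sup>2)"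
      by (simp add: sum_distrib_right)
    finally show ?thesis .
  qed
  also have "\<dots> = (\<Sum>j\<in>UNIV. (\<mu> v* P) $ j * (x $ j)\<^sup>2)"
    by (simp add: vector_matrix_mult_def mult.commute)
  also have "\<dots> = inner_mu \<mu> x x" using muP by (simp add: inner_mu_def power2_eq_square mult.assoc)
  finally show ?thesis unfolding norm_mu_def by simp
qed


lemma mat_pow_nonneg:
  assumes "stochastic_matrix P"
  shows "mat_pow P k $ i $ j \<ge> 0"
proof (induction k arbitrary: i j)
  case 0 then show ?case by (simp add: mat_def)
next
  case (Suc k)
  then show ?case using assms unfolding stochastic_matrix_def
    by (simp add: matrix_matrix_mult_def sum_nonneg)
qed

lemma stat_pow:
  assumes "stationary_distribution P \<mu>"
  shows "\<mu> v* mat_pow P k = \<mu>"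
proof (induction k)
  case 0 then show ?case by (simp add: vector_matrix_mul_rid)
next
  case (Suc k)
  have "\<mu> v* mat_pow P (Suc k) = (\<mu> v* mat_pow P k) v* P"
    by (simp add: vector_matrix_mul_assoc)
  then show ?case using Suc assms by (simp add: stationary_distribution_def)
qed

lemma mu_pos:
  assumes stoch: "stochastic_matrix P" and irred: "irreducible_chain P"
    and stat: "stationary_distribution P \<mu>"
  shows "\<mu> $ j > 0"
proof -
  have mu0: "\<forall>i. \<mu> $ i \<ge> 0" and s1: "(\<Sum>i\<in>UNIV. \<mu> $ i) = 1"
    using stat by (auto simp: stationary_distribution_def)
  obtain i where i: "\<mu> $ i > 0"
  proof (rule ccontr)
    assume "\<not> thesis"
    then have "\<forall>i. \<mu> $ i = 0" using mu0 that less_eq_real_def by metis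
    then show False using s1 by simp
  qed
  obtain k where k: "mat_pow P k $ i $ j > 0" using irred unfolding irreducible_chain_def by blast
  have "\<mu> $ j = (\<mu> v* mat_pow P k) $ j" using stat_pow[OF stat] by simp
  also have "\<dots> = (\<Sum>l\<in>UNIV. mat_pow P k $ l $ j * \<mu> $ l)" by (simp add: vector_matrix_mult_def mult.commute)
  also have "\<dots> \<ge> mat_pow P k $ i $ j * \<mu> $ i"
    by (rule member_le_sum) (use mu0 mat_pow_nonneg[OF stoch] in auto)
  finally show ?thesis using i k by (smt (verit) mult_pos_pos)
qed

lemma proj_mu_prop:
  fixes \<Phi> :: "real^'d^'n"
  assumes pos: "\<forall>i. \<mu> $ i > 0"
  shows "proj_mu \<mu> \<Phi> x \<in> range (\<lambda>w. \<Phi> *v w)"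
proof -
  have mu0: "\<forall>i. \<mu> $ i \<ge> 0" using pos less_imp_le by blast
  let ?R = "range (\<lambda>w. \<Phi> *v w)"
  have subR: "subspace ?R"
    using linear_subspace_image[OF matrix_vector_mul_linear[of \<Phi>] subspace_UNIV] by simp
  have subS: "subspace (scl \<mu> ` ?R)"
    by (rule linear_subspace_image[OF linear_scl subR])
  obtain y z where y: "y \<in> span (scl \<mu> ` ?R)" and z: "\<And>w. w \<in> span (scl \<mu> ` ?R) \<Longrightarrow> orthogonal z w"
    and yz: "scl \<mu> x = y + z"
    using orthogonal_subspace_decomp_exists[of "scl \<mu> ` ?R" "scl \<mu> x"] by metis
  from y subS have "y \<in> scl \<mu> ` ?R" by (metis span_eq_iff)
  then obtain w where w: "y = scl \<mu> (\<Phi> *v w)" by auto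
  have ex: "\<Phi> *v w \<in> ?R \<and> (\<forall>v. inner_mu \<mu> (x - \<Phi> *v w) (\<Phi> *v v) = 0)"
  proof (intro conjI allI)
    fix v
    have "inner_mu \<mu> (x - \<Phi> *v w) (\<Phi> *v v) = z \<bullet> scl \<mu> (\<Phi> *v v)"
      using yz w by (simp add: inner_mu_scl[OF mu0] scl_linear)
    also have "\<dots> = 0" using z[of "scl \<mu> (\<Phi> *v v)"] span_superset[of "scl \<mu> ` ?R"]
      by (simp add: orthogonal_def image_subset_iff)
    finally show "inner_mu \<mu> (x - \<Phi> *v w) (\<Phi> *v v) = 0" .
  qed auto
  have uniq: "y1 = y2" if 1: "y1 \<in> ?R \<and> (\<forall>v. inner_mu \<mu> (x - y1) (\<Phi> *v v) = 0)"
    and 2: "y2 \<in> ?R \<and> (\<forall>v. inner_mu \<mu> (x - y2) (\<Phi> *v v) = 0)" for y1 y2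
  proof -
    obtain a b where a: "y1 = \<Phi> *v a" and b: "y2 = \<Phi> *v b" using 1 2 by auto
    have d: "y1 - y2 = \<Phi> *v (a - b)" using a b by (simp add: matrix_vector_mult_diff_distrib)
    have "inner_mu \<mu> (y1 - y2) (y1 - y2) = inner_mu \<mu> (x - y2) (\<Phi> *v (a - b)) - inner_mu \<mu> (x - y1) (\<Phi> *v (a - b))"
      by (simp add: d[symmetric] inner_mu_simps)
    also have "\<dots> = 0" using 1 2 by simp
    finally have "(\<Sum>i\<in>UNIV. \<mu> $ i * (y1 - y2) $ i * (y1 - y2) $ i) = 0" by (simp add: inner_mu_def)
    then have "\<forall>i\<in>UNIV. \<mu> $ i * (y1 - y2) $ i * (y1 - y2) $ i = 0"
      by (subst (asm) sum_nonneg_eq_0_iff) (use mu0 in \<open>auto simp: mult.assoc\<close>)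
    then show ?thesis using pos by (auto simp: vec_eq_iff) (metis less_irrefl)
  qed
  have "proj_mu \<mu> \<Phi> x \<in> ?R \<and> (\<forall>v. inner_mu \<mu> (x - proj_mu \<mu> \<Phi> x) (\<Phi> *v v) = 0)"
    unfolding proj_mu_def by (rule theI[of _ "\<Phi> *v w"]) (use ex uniq in blast)+
  then show ?thesis by blast
qed

lemma key_ineqs:
  assumes stoch: "stochastic_matrix P" and stat: "stationary_distribution P \<mu>" and g: "0 \<le> \<gamma>"
  shows "inner_mu \<mu> e (e - \<gamma> *\<^sub>R (P *v e)) \<ge> (1 - \<gamma>) * (norm_mu \<mu> e)\<^sup>2"
    and "\<bar>inner_mu \<mu> u (e - \<gamma> *\<^sub>R (P *v e))\<bar> \<le> (1 + \<gamma>) * norm_mu \<mu> u * norm_mu \<mu> e"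
proof -
  have mu0: "\<forall>i. \<mu> $ i \<ge> 0" using stat by (auto simp: stationary_distribution_def)
  have nP: "norm_mu \<mu> (P *v e) \<le> norm_mu \<mu> e" by (rule norm_mu_P[OF stoch stat])
  have ee: "inner_mu \<mu> e e = (norm_mu \<mu> e)\<^sup>2" using mu0 by (simp add: inner_mu_scl norm_mu_scl power2_norm_eq_inner)
  have n0: "norm_mu \<mu> u \<ge> 0" "norm_mu \<mu> e \<ge> 0" using mu0 by (simp_all add: norm_mu_scl)
  have c1: "\<bar>inner_mu \<mu> e (P *v e)\<bar> \<le> norm_mu \<mu> e * norm_mu \<mu> e"
    using inner_mu_CS[OF mu0, of e "P *v e"] nP n0 by (smt (verit) mult_left_mono)
  have "\<gamma> * inner_mu \<mu> e (P *v e) \<le> \<gamma> * (norm_mu \<mu> e * norm_mu \<mu> e)"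
    using c1 g by (intro mult_left_mono) auto
  then show "inner_mu \<mu> e (e - \<gamma> *\<^sub>R (P *v e)) \<ge> (1 - \<gamma>) * (norm_mu \<mu> e)\<^sup>2"
    by (simp add: inner_mu_simps ee power2_eq_square algebra_simps)
  have c2: "\<bar>inner_mu \<mu> u (P *v e)\<bar> \<le> norm_mu \<mu> u * norm_mu \<mu> e"
    using inner_mu_CS[OF mu0, of u "P *v e"] nP n0 by (smt (verit) mult_left_mono)
  have c3: "\<bar>inner_mu \<mu> u e\<bar> \<le> norm_mu \<mu> u * norm_mu \<mu> e" by (rule inner_mu_CS[OF mu0])
  have "\<bar>\<gamma> * inner_mu \<mu> u (P *v e)\<bar> \<le> \<gamma> * (norm_mu \<mu> u * norm_mu \<mu> e)"
    using c2 g by (simp add: abs_mult mult_left_mono)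
  then show "\<bar>inner_mu \<mu> u (e - \<gamma> *\<^sub>R (P *v e))\<bar> \<le> (1 + \<gamma>) * norm_mu \<mu> u * norm_mu \<mu> e"
    using c3 by (simp add: inner_mu_simps algebra_simps)
qed


lemma g_zero:
  fixes g :: "real^'d \<Rightarrow> real^'n" and Dg :: "real^'d \<Rightarrow> real^'d^'n"
  assumes deriv: "\<And>x. (g has_derivative (\<lambda>v. Dg x *v v)) (at x)"
    and hom: "\<And>x. g x = h *\<^sub>R (Dg x *v x)" and h: "h \<le> 0"
  shows "g x = 0"
proof (cases "h = 0")
  case True then show ?thesis using hom by simp
next
  case False
  with h have hn: "h < 0" by simp
  define a where "a = - 1 / h"
  have a: "a > 0" "a * h = -1" using hn by (auto simp: a_def field_simps)
  define \<psi> where "\<psi> t = t powr a *\<^sub>R g (t *\<^sub>R x)" for t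
  have dpsi: "(\<psi> has_derivative (\<lambda>s. 0)) (at t within {0<..<2})" if t: "t \<in> {0<..<2}" for t
  proof -
    have tp: "t > 0" using t by simp
    have d1: "((\<lambda>t. g (t *\<^sub>R x)) has_derivative (\<lambda>s. Dg (t *\<^sub>R x) *v (s *\<^sub>R x))) (at t)"
      by (rule has_derivative_compose[OF bounded_linear_imp_has_derivative[OF bounded_linear_scaleR_left] deriv])
    have d2: "((\<lambda>t. t powr a) has_derivative (\<lambda>s. (a * t powr (a - 1)) * s)) (at t)"
      using has_real_derivative_powr[OF tp, of a] by (simp add: has_field_derivative_def)
    have d3: "(\<psi> has_derivative (\<lambda>s. t powr a *\<^sub>R (Dg (t *\<^sub>R x) *v (s *\<^sub>R x)) + ((a * t powr (a - 1)) * s) *\<^sub>R g (t *\<^sub>R x))) (at t)"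
      unfolding \<psi>_def by (rule has_derivative_scaleR[OF d2 d1])
    have eq: "(\<lambda>s. t powr a *\<^sub>R (Dg (t *\<^sub>R x) *v (s *\<^sub>R x)) + ((a * t powr (a - 1)) * s) *\<^sub>R g (t *\<^sub>R x)) = (\<lambda>s. 0)"
    proof
      fix s
      let ?u = "Dg (t *\<^sub>R x) *v x"
      have g1: "g (t *\<^sub>R x) = (h * t) *\<^sub>R ?u" using hom[of "t *\<^sub>R x"] by (simp add: matrix_vector_mult_scaleR)
      have p: "t powr (a - 1) * t = t powr a" using tp by (simp add: powr_diff)
      have "t powr a *\<^sub>R (Dg (t *\<^sub>R x) *v (s *\<^sub>R x)) + ((a * t powr (a - 1)) * s) *\<^sub>R g (t *\<^sub>R x)
          = (t powr a * s) *\<^sub>R ?u + (a * t powr (a - 1) * s * (h * t)) *\<^sub>R ?u"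
        by (simp only: g1 matrix_vector_mult_scaleR scaleR_scaleR)
      also have "\<dots> = (t powr a * s + a * t powr (a - 1) * s * (h * t)) *\<^sub>R ?u"
        by (simp only: scaleR_add_left)
      also have "a * t powr (a - 1) * s * (h * t) = (a * h) * (t powr (a - 1) * t) * s"
        by (simp only: ac_simps)
      also have "\<dots> = - (t powr a * s)" using a p by simp
      also have "(t powr a * s + - (t powr a * s)) *\<^sub>R ?u = 0" by simp
      finally show "t powr a *\<^sub>R (Dg (t *\<^sub>R x) *v (s *\<^sub>R x)) + ((a * t powr (a - 1)) * s) *\<^sub>R g (t *\<^sub>R x) = 0" .
    qed
    show ?thesis by (rule has_derivative_subset[OF d3[unfolded eq]]) simp
  qed
  obtain c where c: "\<And>t. t \<in> {0<..<2} \<Longrightarrow> \<psi> t = c"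
  proof -
    have "\<exists>c. \<forall>t\<in>{0<..<2::real}. \<psi> t = c"
      by (rule has_derivative_zero_constant) (auto intro: dpsi)
    then show ?thesis using that by blast
  qed
  have c1: "c = g x" using c[of 1] by (simp add: \<psi>_def)
  have t1: "((\<lambda>t. t powr a) \<longlongrightarrow> 0) (at_right 0)"
  proof (rule tendsto_zero_powrI[where b=a])
    show "((\<lambda>t. t) \<longlongrightarrow> 0) (at_right (0::real))" by (rule tendsto_ident_at)
    show "((\<lambda>t. a) \<longlongrightarrow> a) (at_right (0::real))" by (rule tendsto_const)
    show "\<forall>\<^sub>F t in at_right (0::real). 0 \<le> t"
      using eventually_at_right_real[of 0 1] by (rule eventually_mono) auto
  qed (rule a)
  have t2: "((\<lambda>t. g (t *\<^sub>R x)) \<longlongrightarrow> g (0 *\<^sub>R x)) (at_right 0)"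
    by (rule isCont_tendsto_compose[OF has_derivative_continuous[OF deriv]]) (intro tendsto_intros)
  have "(\<psi> \<longlongrightarrow> 0 *\<^sub>R g (0 *\<^sub>R x)) (at_right 0)"
    unfolding \<psi>_def by (rule tendsto_scaleR[OF t1 t2])
  then have l0: "(\<psi> \<longlongrightarrow> 0) (at_right 0)" by simp
  have ev: "\<forall>\<^sub>F t in at_right 0. g x = \<psi> t"
  proof -
    have "\<forall>\<^sub>F t in at_right 0. t \<in> {0<..<2::real}" by (rule eventually_at_right_real) simp
    then show ?thesis by (rule eventually_mono) (metis c c1)
  qed
  have "(\<psi> \<longlongrightarrow> g x) (at_right 0)"
    by (rule Lim_transform_eventually[OF tendsto_const ev])
  then show ?thesis using tendsto_unique[OF trivial_limit_at_right_real l0] by simp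
qed


lemma diag_apply: "diag_mat \<mu> *v q = (\<chi> i. \<mu> $ i * q $ i)"
proof -
  have "(\<Sum>j\<in>UNIV. (if i = j then \<mu> $ i else 0) * q $ j) = \<mu> $ i * q $ i" for i
    by (simp add: if_distrib[of "\<lambda>x. x * _"] cong: if_cong)
  then show ?thesis by (simp add: vec_eq_iff matrix_vector_mult_def diag_mat_def)
qed

lemma A_apply:
  "u \<bullet> ((diag_mat \<mu> ** (mat 1 - \<gamma> *\<^sub>R P)) *v r) = inner_mu \<mu> u (r - \<gamma> *\<^sub>R (P *v r))"
proof -
  have "(diag_mat \<mu> ** (mat 1 - \<gamma> *\<^sub>R P)) *v r = diag_mat \<mu> *v (r - \<gamma> *\<^sub>R (P *v r))"
    by (simp add: matrix_vector_mul_assoc[symmetric] matrix_vector_mult_diff_rdistrib scaleR_matrix_vector_assoc)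
  then have "u \<bullet> ((diag_mat \<mu> ** (mat 1 - \<gamma> *\<^sub>R P)) *v r) = u \<bullet> (diag_mat \<mu> *v (r - \<gamma> *\<^sub>R (P *v r)))"
    by simp
  also have "\<dots> = inner_mu \<mu> u (r - \<gamma> *\<^sub>R (P *v r))"
    unfolding diag_apply inner_vec_def inner_mu_def by (simp add: algebra_simps)
  finally show ?thesis .
qed

lemma transp_inner:
  fixes \<Phi> :: "real^'d^'n"
  shows "x \<bullet> (transpose \<Phi> *v z) = (\<Phi> *v x) \<bullet> z"
  by (metis dot_lmul_matrix inner_commute transpose_matrix_vector)



theorem corollary1:
  fixes P :: "real^'n^'n" and \<mu> :: "real^'n" and r :: "'n \<Rightarrow> 'n \<Rightarrow> real"
    and \<gamma> :: real and Vstar :: "real^'n"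
    and \<Phi> :: "real^'d1^'n" and g :: "real^'d2 \<Rightarrow> real^'n" and Dg :: "real^'d2 \<Rightarrow> real^'d2^'n"
    and h C ell :: real
    and \<theta> :: "real \<Rightarrow> (real^'d1) \<times> (real^'d2)"
  assumes stoch: "stochastic_matrix P"
    and irred: "irreducible_chain P"
    and aper: "aperiodic_chain P"
    and stat: "stationary_distribution P \<mu>"
    and gamma: "0 \<le> \<gamma>" "\<gamma> < 1"
    and Vstar: "Vstar = (\<chi> s. \<Sum>s'\<in>UNIV. P $ s $ s' * r s s') + \<gamma> *\<^sub>R (P *v Vstar)"
    and rank: "rank \<Phi> = min CARD('n) CARD('d1)"
    and g_deriv: "\<And>x. (g has_derivative (\<lambda>v. Dg x *v v)) (at x)"
    and g_C1: "continuous_on UNIV Dg"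
    and g_hom: "\<And>x. g x = h *\<^sub>R (Dg x *v x)"
    and C: "C > 0" and ell: "ell > 0"
    and growth: "\<And>\<theta>1 \<theta>2. norm_mu \<mu> (\<Phi> *v \<theta>1 + g \<theta>2) \<le> C * norm (\<theta>1, \<theta>2) powr ell"
    and ode: "\<And>t. t \<ge> 0 \<Longrightarrow>
       (\<theta> has_vector_derivative
          (let A = diag_mat \<mu> ** (mat 1 - \<gamma> *\<^sub>R P);
               res = \<Phi> *v fst (\<theta> t) + g (snd (\<theta> t)) - Vstar
           in (- (transpose \<Phi> *v (A *v res)),
               - (transpose (Dg (snd (\<theta> t))) *v (A *v res)))))
        (at t within {0..})"
  shows "Liminf at_top (\<lambda>t. ereal (norm_mu \<mu> (\<Phi> *v fst (\<theta> t) + g (snd (\<theta> t)) - Vstar)))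
         \<le> ereal ((1 + (1 + \<gamma>) / (1 - \<gamma>)) * norm_mu \<mu> (Vstar - proj_mu \<mu> \<Phi> Vstar))"
proof -
  have mu0: "\<forall>i. \<mu> $ i \<ge> 0" using stat by (auto simp: stationary_distribution_def)
  have pos: "\<forall>i. \<mu> $ i > 0" using mu_pos[OF stoch irred stat] by blast
  obtain wst where wst: "proj_mu \<mu> \<Phi> Vstar = \<Phi> *v wst" using proj_mu_prop[OF pos, of \<Phi> Vstar] by auto
  define eps where "eps = Vstar - proj_mu \<mu> \<Phi> Vstar"
  define e where "e t = \<Phi> *v fst (\<theta> t) + g (snd (\<theta> t)) - Vstar" for t
  define c where "c = max h 0"
  have c0: "c \<ge> 0" by (simp add: c_def)
  have cg: "g y = c *\<^sub>R (Dg y *v y)" for y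
  proof (cases "h > 0")
    case True then show ?thesis using g_hom[of y] by (simp add: c_def)
  next
    case False
    then have "g y = 0" by (intro g_zero[OF g_deriv g_hom]) simp
    then show ?thesis using False by (simp add: c_def)
  qed
  define L where "L t = (fst (\<theta> t) - wst) \<bullet> (fst (\<theta> t) - wst) + c * (snd (\<theta> t) \<bullet> snd (\<theta> t))" for t
  have L0: "L t \<ge> 0" for t unfolding L_def using c0 by simp
  define D where "D t = -2 * inner_mu \<mu> (e t + eps) (e t - \<gamma> *\<^sub>R (P *v e t))" for t
  have dL: "(L has_real_derivative D t) (at t within {0..})" if t0: "t \<ge> 0" for t
  proof -
    define z where "z = (diag_mat \<mu> ** (mat 1 - \<gamma> *\<^sub>R P)) *v e t"
    define a1 where "a1 = - (transpose \<Phi> *v z)"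
    define a2 where "a2 = - (transpose (Dg (snd (\<theta> t))) *v z)"
    have dth: "(\<theta> has_derivative (\<lambda>s. s *\<^sub>R (a1, a2))) (at t within {0..})"
      using ode[OF t0] unfolding Let_def has_vector_derivative_def a1_def a2_def z_def e_def by simp
    have d1: "((\<lambda>t. fst (\<theta> t) - wst) has_derivative (\<lambda>s. s *\<^sub>R a1)) (at t within {0..})"
      using has_derivative_diff[OF has_derivative_fst[OF dth] has_derivative_const[of wst]] by simp
    have d2: "((\<lambda>t. snd (\<theta> t)) has_derivative (\<lambda>s. s *\<^sub>R a2)) (at t within {0..})"
      using has_derivative_snd[OF dth] by simp
    note d3 = has_derivative_add[OF has_derivative_inner[OF d1 d1] has_derivative_mult[OF has_derivative_const[of c] has_derivative_inner[OF d2 d2]]]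
    have k3: "\<Phi> *v (fst (\<theta> t) - wst) + c *\<^sub>R (Dg (snd (\<theta> t)) *v snd (\<theta> t)) = e t + eps"
      by (simp add: matrix_vector_mult_diff_distrib cg[symmetric] e_def eps_def wst)
    have k4: "(fst (\<theta> t) - wst) \<bullet> a1 + c * (snd (\<theta> t) \<bullet> a2) = - inner_mu \<mu> (e t + eps) (e t - \<gamma> *\<^sub>R (P *v e t))"
    proof -
      have "(fst (\<theta> t) - wst) \<bullet> a1 + c * (snd (\<theta> t) \<bullet> a2)
          = - ((\<Phi> *v (fst (\<theta> t) - wst) + c *\<^sub>R (Dg (snd (\<theta> t)) *v snd (\<theta> t))) \<bullet> z)"
        unfolding a1_def a2_def inner_minus_right transp_inner by (simp add: inner_add_left)
      also have "\<dots> = - ((e t + eps) \<bullet> z)" by (simp only: k3)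
      finally show ?thesis by (simp add: z_def A_apply)
    qed
    have hs: "(fst (\<theta> t) - wst) \<bullet> (s *\<^sub>R a1) + (s *\<^sub>R a1) \<bullet> (fst (\<theta> t) - wst) +
           (c * (snd (\<theta> t) \<bullet> (s *\<^sub>R a2) + (s *\<^sub>R a2) \<bullet> snd (\<theta> t)) + 0 * (snd (\<theta> t) \<bullet> snd (\<theta> t)))
           = D t * s" for s
    proof -
      have "(fst (\<theta> t) - wst) \<bullet> (s *\<^sub>R a1) + (s *\<^sub>R a1) \<bullet> (fst (\<theta> t) - wst) +
           (c * (snd (\<theta> t) \<bullet> (s *\<^sub>R a2) + (s *\<^sub>R a2) \<bullet> snd (\<theta> t)) + 0 * (snd (\<theta> t) \<bullet> snd (\<theta> t)))
           = 2 * s * ((fst (\<theta> t) - wst) \<bullet> a1 + c * (snd (\<theta> t) \<bullet> a2))"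
        by (simp add: inner_commute[of a1] inner_commute[of a2] algebra_simps)
      then show ?thesis by (simp add: k4 D_def)
    qed
    show ?thesis unfolding has_field_derivative_def L_def[abs_def]
      by (rule has_derivative_eq_rhs[OF d3]) (rule ext, rule hs)
  qed
  have n0: "norm_mu \<mu> eps \<ge> 0" using mu0 by (simp add: norm_mu_scl)
  have Dle: "D t \<le> -2 * ((1 - \<gamma>) * (norm_mu \<mu> (e t))\<^sup>2 - (1 + \<gamma>) * norm_mu \<mu> eps * norm_mu \<mu> (e t))" for t
  proof -
    note i1 = key_ineqs(1)[OF stoch stat gamma(1), of "e t"]
    note i2 = key_ineqs(2)[OF stoch stat gamma(1), of eps "e t"]
    have "D t = -2 * (inner_mu \<mu> (e t) (e t - \<gamma> *\<^sub>R (P *v e t)) + inner_mu \<mu> eps (e t - \<gamma> *\<^sub>R (P *v e t)))"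
      unfolding D_def by (simp only: inner_mu_simps(1))
    then show ?thesis using i1 i2 by (simp add: abs_le_iff)
  qed
  define n where "n = norm_mu \<mu> eps"
  define K where "K = (1 + (1 + \<gamma>) / (1 - \<gamma>)) * n"
  have g1: "1 - \<gamma> > 0" using gamma by simp
  have K0: "K \<ge> 0" unfolding K_def n_def using n0 gamma by simp
  have KK: "(1 - \<gamma>) * K = (1 - \<gamma>) * n + (1 + \<gamma>) * n" unfolding K_def using g1 by (simp add: field_simps)
  show ?thesis
  proof (rule ccontr)
    assume "\<not> ?thesis"
    then have "ereal K < Liminf at_top (\<lambda>t. ereal (norm_mu \<mu> (e t)))"
      unfolding e_def K_def n_def eps_def by simp
    then obtain b where b1: "ereal K < ereal b" and b2: "ereal b < Liminf at_top (\<lambda>t. ereal (norm_mu \<mu> (e t)))"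
      using ereal_dense2 by blast
    have "\<forall>\<^sub>F t in at_top. ereal b < ereal (norm_mu \<mu> (e t))"
      using b2 le_Liminf_iff[of "Liminf at_top (\<lambda>t. ereal (norm_mu \<mu> (e t)))" at_top "\<lambda>t. ereal (norm_mu \<mu> (e t))"] by blast
    then obtain T0 where T0: "\<And>t. t \<ge> T0 \<Longrightarrow> b < norm_mu \<mu> (e t)"
      by (auto simp: eventually_at_top_linorder)
    define T where "T = max T0 1"
    have bK: "K < b" using b1 by simp
    have bpos: "b > 0" using bK K0 by simp
    have gap: "(1 - \<gamma>) * b - (1 + \<gamma>) * n > 0"
    proof -
      have "(1 - \<gamma>) * K < (1 - \<gamma>) * b" using bK g1 by simp
      moreover have "(1 - \<gamma>) * n \<ge> 0" using g1 n0 n_def by simp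
      ultimately show ?thesis using KK by linarith
    qed
    define \<delta> where "\<delta> = 2 * b * ((1 - \<gamma>) * b - (1 + \<gamma>) * n)"
    have dpos: "\<delta> > 0" unfolding \<delta>_def using bpos gap by simp
    have Dd: "D t \<le> - \<delta>" if tT: "t \<ge> T" for t
    proof -
      define x where "x = norm_mu \<mu> (e t)"
      have xb: "x > b" using T0[of t] tT unfolding T_def x_def by simp
      have fac: "(1 - \<gamma>) * x\<^sup>2 - (1 + \<gamma>) * n * x - ((1 - \<gamma>) * b\<^sup>2 - (1 + \<gamma>) * n * b)
          = (x - b) * ((1 - \<gamma>) * (x + b) - (1 + \<gamma>) * n)"
        by (simp add: power2_eq_square algebra_simps)
      have "(1 - \<gamma>) * (x + b) \<ge> (1 - \<gamma>) * b" using g1 xb bpos by simp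
      then have "(x - b) * ((1 - \<gamma>) * (x + b) - (1 + \<gamma>) * n) \<ge> 0"
        using xb gap by (intro mult_nonneg_nonneg) auto
      then have "(1 - \<gamma>) * x\<^sup>2 - (1 + \<gamma>) * n * x \<ge> (1 - \<gamma>) * b\<^sup>2 - (1 + \<gamma>) * n * b"
        using fac by linarith
      then show ?thesis using Dle[of t] unfolding \<delta>_def x_def n_def by (simp add: power2_eq_square algebra_simps)
    qed
    define M where "M t = L t + \<delta> * t" for t
    have Mmono: "M t \<le> M T" if "t \<ge> T" for t
    proof (rule DERIV_nonpos_imp_nonincreasing[OF that])
      fix x assume x: "T \<le> x" "x \<le> t"
      have xp: "x > 0" using x unfolding T_def by simp
      have "at x within {0..} = at x"
        by (rule at_within_interior) (use xp interior_Ici[of "-1::real" 0] in simp)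
      then have dLx: "(L has_real_derivative D x) (at x)" using dL[of x] xp by simp
      have "(M has_real_derivative D x + \<delta>) (at x)"
        unfolding M_def[abs_def] using DERIV_add[OF dLx DERIV_cmult_Id[of \<delta>]] by (simp add: mult.commute)
      moreover have "D x + \<delta> \<le> 0" using Dd[of x] x by simp
      ultimately show "\<exists>y. (M has_real_derivative y) (at x) \<and> y \<le> 0" by blast
    qed
    define t1 where "t1 = T + L T / \<delta> + 1"
    have t1T: "t1 \<ge> T" unfolding t1_def using L0[of T] dpos by simp
    have "L t1 + \<delta> * t1 \<le> L T + \<delta> * T" using Mmono[OF t1T] by (simp add: M_def)
    moreover have "\<delta> * t1 = \<delta> * T + L T + \<delta>" unfolding t1_def using dpos by (simp add: field_simps)
    ultimately have "L t1 \<le> - \<delta>" by linarith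
    then show False using L0[of t1] dpos by linarith
  qed
qed


end
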